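(* Let $v_0=\epsilon$ (the empty word) and for $i>0$ let $v_i=\bigl(v_{i-1}0v_{i-1}1v_{i-1}1v_{i-1}0v_{i-1}2v_{i-1}2\bigr)^{(+)}$ over the alphabet $\{0,1,2\}$. Then for every $i$, the palindrome $v_i$ is rich.
   Context: For a finite word $w$, $w^{(+)}$ denotes the shortest palindrome having $w$ as a prefix. A finite word $w$ is rich if it contains exactly $|w|+1$ distinct palindromic factors (counting the empty word). *)

theory Defs
  imports Main "HOL-Library.Sublist"
begin

definition is_pal :: "'a list \<Rightarrow> bool" where
  "is_pal w \<longleftrightarrow> rev w = w"

text \<open>Palindromic closure: the shortest palindrome having w as a prefix.
  (Unique, since it is determined by its length and the prefix w.)\<close>
definition pal_closure :: "'a list \<Rightarrow> 'a list" where
  "pal_closure w = (ARG_MIN length p. is_pal p \<and> prefix w p)"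

definition pal_factors :: "'a list \<Rightarrow> 'a list set" where
  "pal_factors w = {u. sublist u w \<and> is_pal u}"

definition rich :: "'a list \<Rightarrow> bool" where
  "rich w \<longleftrightarrow> card (pal_factors w) = length w + 1"

fun v :: "nat \<Rightarrow> nat list" where
  "v 0 = []"
| "v (Suc i) = pal_closure
     (v i @ [0] @ v i @ [1] @ v i @ [1] @ v i @ [0] @ v i @ [2] @ v i @ [2])"

end

theory Submission
  imports Defs
begin

lemma pf_finite: "finite (pal_factors w)"
proof -
  have "pal_factors w \<subseteq> set (sublists w)" by (auto simp: pal_factors_def)
  thus ?thesis by (rule finite_subset) simp
qed

lemma pf_Nil: "pal_factors [] = {[]}"
  by (auto simp: pal_factors_def is_pal_def)

lemma suffix_pal_prefix:
  assumes "suffix y X" "is_pal y" "is_pal X"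
  shows "prefix y X"
proof -
  have "prefix (rev y) (rev X)" using assms(1) by (simp add: suffix_to_prefix)
  thus ?thesis using assms(2,3) by (simp add: is_pal_def)
qed

lemma pf_snoc_sub: "\<exists>X. pal_factors (w@[a]) \<subseteq> insert X (pal_factors w)"
proof -
  define S where "S = {P. suffix P (w@[a]) \<and> is_pal P}"
  have fS: "finite S" unfolding S_def
    by (rule finite_subset[of _ "set (suffixes (w@[a]))"]) auto
  have "[] \<in> S" by (simp add: S_def is_pal_def)
  moreover have "\<forall>Y. Y \<in> S \<longrightarrow> length Y < Suc (length (w@[a]))"
    by (auto simp: S_def dest!: suffix_length_le)
  ultimately have "\<exists>X. X \<in> S \<and> (\<forall>Y. Y \<in> S \<longrightarrow> length Y \<le> length X)"
    by (rule ex_has_greatest_nat[where P="\<lambda>P. P \<in> S"])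
  then obtain X where XS: "X \<in> S" and Xmax: "\<And>Y. Y \<in> S \<Longrightarrow> length Y \<le> length X"
    by blast
  have "pal_factors (w@[a]) \<subseteq> insert X (pal_factors w)"
  proof
    fix y assume "y \<in> pal_factors (w@[a])"
    hence y: "sublist y (w@[a])" "is_pal y" by (auto simp: pal_factors_def)
    show "y \<in> insert X (pal_factors w)"
    proof (cases "sublist y w")
      case True thus ?thesis using y by (simp add: pal_factors_def)
    next
      case False
      hence ys: "suffix y (w@[a])" using y by (simp add: sublist_snoc)
      hence yS: "y \<in> S" using y by (simp add: S_def)
      show ?thesis
      proof (cases "y = X")
        case True thus ?thesis by simp
      next
        case ne: False
        have Xs: "suffix X (w@[a])" "is_pal X" using XS by (auto simp: S_def)
        have le: "length y \<le> length X" using Xmax yS by simp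
        have "suffix y X" by (rule suffix_length_suffix[OF ys Xs(1) le])
        hence pr: "prefix y X" using suffix_pal_prefix y(2) Xs(2) by blast
        have lt: "length y < length X" using ne pr prefix_length_less[of y X] by (simp add: strict_prefix_def)
        have "X \<noteq> []" using lt by auto
        then obtain Xb where Xb: "X = Xb @ [a]" "suffix Xb w" using Xs(1) suffix_snoc[of X w a]
          by blast
        have "prefix y Xb" using pr lt Xb(1) by (auto simp: prefix_snoc)
        hence "sublist y w" using Xb(2) by (rule sublist_order.order_trans[OF prefix_imp_sublist suffix_imp_sublist])
        thus ?thesis using False by simp
      qed
    qed
  qed
  thus ?thesis by (rule exI)
qed

lemma card_pf_snoc: "card (pal_factors (w@[a])) \<le> Suc (card (pal_factors w))"
proof -
  from pf_snoc_sub[of w a] obtain X where "pal_factors (w@[a]) \<subseteq> insert X (pal_factors w)" ..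
  hence "card (pal_factors (w@[a])) \<le> card (insert X (pal_factors w))"
    by (simp add: card_mono pf_finite)
  also have "\<dots> \<le> Suc (card (pal_factors w))" by (simp add: card_insert_if pf_finite)
  finally show ?thesis .
qed

lemma pf_mono: "pal_factors w \<subseteq> pal_factors (w@[a])"
  unfolding pal_factors_def by (auto intro: sublist_order.order_trans[OF _ sublist_append_rightI])

lemma card_pf_le: "card (pal_factors w) \<le> length w + 1"
proof (induction w rule: rev_induct)
  case Nil thus ?case by (simp add: pf_Nil)
next
  case (snoc a w) thus ?case using card_pf_snoc[of w a] by simp
qed

lemma rich_Nil: "rich []" by (simp add: rich_def pf_Nil)

lemma rich_butlast: "rich (w@[a]) \<Longrightarrow> rich w"
  using card_pf_snoc[of w a] card_pf_le[of w] by (simp add: rich_def)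

lemma rich_prefix: "rich w \<Longrightarrow> prefix p w \<Longrightarrow> rich p"
proof (induction w rule: rev_induct)
  case Nil thus ?case by simp
next
  case (snoc a w)
  show ?case
  proof (cases "p = w @ [a]")
    case True thus ?thesis using snoc.prems(1) by simp
  next
    case False
    hence pw: "prefix p w" using snoc.prems(2) by (simp add: prefix_snoc)
    have "rich w" using rich_butlast[OF snoc.prems(1)] .
    from snoc.IH[OF this pw] show ?thesis .
  qed
qed

lemma rich_new_pal:
  assumes "rich (w@[a])"
  shows "\<exists>P. suffix P (w@[a]) \<and> is_pal P \<and> \<not> sublist P w"
proof (rule ccontr)
  assume nx: "\<not> ?thesis"
  have "pal_factors (w@[a]) \<subseteq> pal_factors w"
  proof
    fix y assume "y \<in> pal_factors (w@[a])"
    hence y: "sublist y (w@[a])" "is_pal y" unfolding pal_factors_def by simp_all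
    have "sublist y w"
    proof (rule ccontr)
      assume "\<not> sublist y w"
      hence "suffix y (w@[a])" using y(1) sublist_snoc[of y w a] by simp
      thus False using \<open>\<not> sublist y w\<close> y(2) nx by blast
    qed
    thus "y \<in> pal_factors w" using y(2) unfolding pal_factors_def by simp
  qed
  hence "card (pal_factors (w@[a])) \<le> card (pal_factors w)" by (simp add: card_mono pf_finite)
  thus False using assms card_pf_le[of w] by (simp add: rich_def)
qed

lemma rich_snoc:
  assumes "rich w" "suffix P (w@[a])" "is_pal P" "\<not> sublist P w"
  shows "rich (w@[a])"
proof -
  have "P \<in> pal_factors (w@[a])" unfolding pal_factors_def
    using assms(3) suffix_imp_sublist[OF assms(2)] by simp
  hence "insert P (pal_factors w) \<subseteq> pal_factors (w@[a])"
    using pf_mono[of w a] by (rule insert_subsetI)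
  hence "card (insert P (pal_factors w)) \<le> card (pal_factors (w@[a]))"
    by (simp add: card_mono pf_finite)
  moreover have "P \<notin> pal_factors w" using assms(4) by (simp add: pal_factors_def)
  ultimately have "Suc (card (pal_factors w)) \<le> card (pal_factors (w@[a]))"
    by (simp add: pf_finite)
  thus ?thesis using assms(1) card_pf_le[of "w@[a]"] by (simp add: rich_def)
qed


definition sw :: "nat list" where "sw = [0,1,1,0,2,2,0,1,1,0]"
definition psi :: "nat list \<Rightarrow> nat list" where "psi u = concat (map (\<lambda>c. sw @ [c]) u)"
definition Wm :: "nat list \<Rightarrow> nat list" where "Wm u = psi u @ sw"

definition chk :: "nat list \<Rightarrow> bool" where
  "chk w = (\<forall>n<length w. \<exists>P\<in>set (suffixes (take (Suc n) w)). is_pal P \<and> \<not> sublist P (take n w))"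

lemma chk_rich: assumes "chk w" shows "rich w"
proof -
  have "\<forall>N\<le>length w. rich (take N w)"
  proof (intro allI impI)
    fix N assume "N \<le> length w"
    thus "rich (take N w)"
    proof (induction N)
      case 0 thus ?case by (simp add: rich_Nil)
    next
      case (Suc n)
      hence n: "n < length w" by simp
      then obtain P where P: "suffix P (take (Suc n) w)" "is_pal P" "\<not> sublist P (take n w)"
        using assms unfolding chk_def by auto
      have t: "take (Suc n) w = take n w @ [w!n]" using n by (simp add: take_Suc_conv_app_nth)
      show ?case using rich_snoc[of "take n w" P "w!n"] Suc P t by simp
    qed
  qed
  thus ?thesis by (metis order_refl take_all)
qed


lemma length_psi[simp]: "length (psi u) = 11 * length u"
  by (induction u) (auto simp: psi_def sw_def)

lemma length_Wm[simp]: "length (Wm u) = 11 * length u + 10"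
  by (simp add: Wm_def sw_def)

lemma psi_append[simp]: "psi (x @ y) = psi x @ psi y" by (simp add: psi_def)
lemma psi_Cons[simp]: "psi (c # y) = sw @ [c] @ psi y" by (simp add: psi_def)
lemma psi_Nil[simp]: "psi [] = []" by (simp add: psi_def)

lemma Wm_Cons: "Wm (c#u) = sw @ [c] @ Wm u" by (simp add: Wm_def)

lemma lt10: "(b::nat) < 10 \<Longrightarrow> b \<in> {0,1,2,3,4,5,6,7,8,9}" by auto

lemma nth_Wm: "n < 11*length u + 10 \<Longrightarrow>
   Wm u ! n = (if n mod 11 = 10 then u!(n div 11) else sw!(n mod 11))"
proof (induction u arbitrary: n)
  case Nil thus ?case by (simp add: Wm_def)
next
  case (Cons c u)
  show ?case
  proof (cases "n < 11")
    case True
    show ?thesis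
    proof (cases "n = 10")
      case True thus ?thesis by (simp add: Wm_Cons nth_append sw_def)
    next
      case False
      hence "n < 10" using \<open>n < 11\<close> by simp
      hence "n \<in> {0,1,2,3,4,5,6,7,8,9}" by (rule lt10)
      thus ?thesis by (auto simp: Wm_Cons sw_def)
    qed
  next
    case False
    define n' where "n' = n - 11"
    have n': "n = n' + 11" using False by (simp add: n'_def)
    have "n' < 11 * length u + 10" using Cons.prems n' by simp
    note IH = Cons.IH[OF this]
    have eq: "Wm (c#u) ! n = Wm u ! n'" using n' by (simp add: Wm_Cons nth_append sw_def)
    have "(n' + 11) div 11 = Suc (n' div 11)" by simp
    thus ?thesis using IH n' eq by simp
  qed
qed

lemma nth_Wm_u: "a < length u \<Longrightarrow> Wm u ! (11*a+10) = u!a"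
  by (subst nth_Wm) auto

lemma nth_Wm_s: "b < 10 \<Longrightarrow> a \<le> length u \<Longrightarrow> Wm u ! (11*a+b) = sw!b"
  by (subst nth_Wm) auto

lemma sw_nth_pal: "b < 10 \<Longrightarrow> sw!(9-b) = sw!b"
  by (drule lt10) (auto simp: sw_def)

lemma sw22: assumes "b < 9" "sw!b = 2" "sw!(Suc b) = 2" shows "b = 4"
proof -
  have "b < 10" using assms(1) by simp
  from lt10[OF this] show ?thesis using assms by (auto simp: sw_def)
qed

lemma sync:
  assumes "\<forall>q<10. Wm z ! (P+q) = sw!q" "P + 10 \<le> length (Wm z)"
  shows "P mod 11 = 0"
proof -
  have a: "Wm z ! (P+4) = 2" and b: "Wm z ! (P+5) = 2" using assms(1) by (auto simp: sw_def)
  have l: "P + 5 < 11 * length z + 10" using assms(2) by simp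
  show ?thesis
  proof (cases "(P+4) mod 11 = 10")
    case True
    hence "(P+5) mod 11 = 0" by presburger
    hence "Wm z ! (P+5) = 0" using nth_Wm[OF l] by (simp add: sw_def)
    thus ?thesis using b by simp
  next
    case F1: False
    show ?thesis
    proof (cases "(P+4) mod 11 = 9")
      case True
      hence "Wm z ! (P+4) = 0" using nth_Wm[of "P+4" z] l by (simp add: sw_def)
      thus ?thesis using a by simp
    next
      case False
      hence c: "(P+5) mod 11 = Suc ((P+4) mod 11)" "(P+4) mod 11 < 9" using F1 by presburger+
      have "sw!((P+4) mod 11) = 2" using a nth_Wm[of "P+4" z] l F1 by simp
      moreover have "sw!(Suc ((P+4) mod 11)) = 2" using b nth_Wm[of "P+5" z] l c by simp
      ultimately have "(P+4) mod 11 = 4" using sw22 c(2) by blast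
      thus ?thesis by presburger
    qed
  qed
qed

lemma rev_Wm: "rev (Wm u) = Wm (rev u)"
proof (induction u)
  case Nil thus ?case by (simp add: Wm_def sw_def)
next
  case (Cons c u)
  have "rev (Wm (c#u)) = rev (Wm u) @ [c] @ rev sw" by (simp add: Wm_Cons)
  also have "\<dots> = Wm (rev u) @ [c] @ sw" using Cons by (simp add: sw_def)
  also have "\<dots> = Wm (rev u @ [c])" by (simp add: Wm_def)
  finally show ?case by simp
qed

lemma pal_Wm: "is_pal u \<Longrightarrow> is_pal (Wm u)"
  by (simp add: is_pal_def rev_Wm)

definition Om :: "nat list \<Rightarrow> nat list" where
  "Om x = x@[0]@x@[1]@x@[1]@x@[0]@x@[2]@x@[2]@x@[0]@x@[1]@x@[1]@x@[0]@x"

lemma Om_Wm: "Om (Wm x) = Wm (Om x)"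
  by (simp add: Om_def Wm_def)

fun T :: "nat \<Rightarrow> nat list" where
  "T 0 = []"
| "T (Suc i) = Wm (T i)"

lemma Om_T: "Om (T i) = T (Suc i)"
proof (induction i)
  case 0 thus ?case by (simp add: Om_def Wm_def sw_def)
next
  case (Suc i)
  have "Om (T (Suc i)) = Wm (Om (T i))" by (simp add: Om_Wm)
  thus ?case using Suc by simp
qed

lemma pal_T: "is_pal (T i)"
  by (induction i) (auto simp: is_pal_def pal_Wm[unfolded is_pal_def])

lemma set_T: "set (T i) \<subseteq> {0,1,2}"
  by (induction i) (auto simp: Wm_def psi_def sw_def)


lemma base_rich: "rich (Wm [0,1,1,0,2])"
  by (rule chk_rich) code_simp


lemma length_sw: "length sw = 10" by (simp add: sw_def)

lemma pal_nth: "is_pal P \<Longrightarrow> n < length P \<Longrightarrow> P!n = P!(length P - Suc n)"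
  by (metis is_pal_def rev_nth)

lemma prefix_nth: "prefix w Y \<Longrightarrow> m < length w \<Longrightarrow> Y!m = w!m"
  by (auto simp: prefix_def nth_append)

lemma closure_eq:
  assumes "is_pal P" "prefix w P" "length P \<le> 2 * length w"
    "\<And>P'. is_pal P' \<Longrightarrow> prefix w P' \<Longrightarrow> length P \<le> length P'"
  shows "pal_closure w = P"
proof -
  let ?C = "pal_closure w"
  have "is_pal ?C \<and> prefix w ?C \<and> (\<forall>y. is_pal y \<and> prefix w y \<longrightarrow> length ?C \<le> length y)"
    using arg_min_nat_lemma[of "\<lambda>p. is_pal p \<and> prefix w p" P length] assms(1,2)
    unfolding pal_closure_def by blast
  hence C: "is_pal ?C" "prefix w ?C" and Cmin: "length ?C \<le> length P"
    using assms(1,2) by auto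
  have len: "length ?C = length P" using Cmin assms(4)[OF C] by simp
  show ?thesis
  proof (rule nth_equalityI)
    show "length ?C = length P" by (rule len)
    fix n assume n: "n < length ?C"
    show "?C!n = P!n"
    proof (cases "n < length w")
      case True thus ?thesis using prefix_nth[OF C(2)] prefix_nth[OF assms(2)] by simp
    next
      case False
      have m: "length P - Suc n < length w" using False n len assms(3) by simp
      have "?C!n = ?C!(length ?C - Suc n)" using pal_nth[OF C(1) n] .
      also have "\<dots> = w!(length P - Suc n)" using prefix_nth[OF C(2) m] len by simp
      also have "\<dots> = P!(length P - Suc n)" using prefix_nth[OF assms(2) m] by simp
      also have "\<dots> = P!n" using pal_nth[OF assms(1), of n] n len by simp
      finally show ?thesis .
    qed
  qed
qed

definition occ :: "nat list \<Rightarrow> nat list \<Rightarrow> nat \<Rightarrow> bool" where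
  "occ y X d \<longleftrightarrow> d + length y + 1 < length X \<and> X!d = 2 \<and> X!(d + length y + 1) = 2
     \<and> (\<forall>q<length y. X!(d+1+q) = y!q)"

lemma occ_unique: "occ (T i) (Om (T i)) d \<Longrightarrow> d = 5 * length (T i) + 4"
proof (induction i arbitrary: d)
  case 0
  have "Om (T 0) = sw" by (simp add: Om_def sw_def)
  hence "d < 9" "sw!d = 2" "sw!(Suc d) = 2" using 0 by (auto simp: occ_def length_sw)
  then show ?case using sw22[of d] by simp
next
  case (Suc i)
  let ?y = "T i"
  let ?z = "Om (T i)"
  have eqs: "T (Suc i) = Wm ?y" "Om (T (Suc i)) = Wm ?z" using Om_Wm by simp_all
  have o: "occ (Wm ?y) (Wm ?z) d" using Suc.prems eqs by simp
  hence lenc: "d + length (Wm ?y) + 1 < length (Wm ?z)" and d2: "Wm ?z!d = 2"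
    and e2: "Wm ?z ! (d + length (Wm ?y) + 1) = 2"
    and mid: "\<And>q. q < length (Wm ?y) \<Longrightarrow> Wm ?z!(d+1+q) = Wm ?y ! q"
    unfolding occ_def by auto
  have "\<forall>q<10. Wm ?z ! (d+1+q) = sw!q"
  proof (intro allI impI)
    fix q :: nat assume q: "q<10"
    hence "Wm ?y ! q = sw!q" using nth_Wm_s[of q 0 ?y] by simp
    thus "Wm ?z ! (d+1+q) = sw!q" using mid[of q] q by simp
  qed
  hence "(d+1) mod 11 = 0" using sync[of ?z "d+1"] lenc by simp
  then obtain r where r: "d + 1 = 11 * r" by (metis mod_eq_0_iff_dvd dvd_def)
  have r1: "r \<ge> 1" using r by (cases r) auto
  have dr: "d = 11*(r-1) + 10" using r r1 by simp
  have lz: "r + length ?y < length ?z" using lenc r by simp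
  have "occ ?y ?z (r-1)"
    unfolding occ_def
  proof (intro conjI allI impI)
    show "r - 1 + length ?y + 1 < length ?z" using lz r1 by simp
    show "?z!(r-1) = 2" using d2 dr nth_Wm_u[of "r-1" ?z] lz by simp
    have deq: "d + length (Wm ?y) + 1 = 11*(r + length ?y) + 10" using r by simp
    have "Wm ?z ! (11*(r + length ?y) + 10) = 2" using e2 unfolding deq .
    hence "?z!(r + length ?y) = 2" using nth_Wm_u[of "r + length ?y" ?z] lz by simp
    thus "?z!(r-1 + length ?y + 1) = 2" using r1 by simp
    fix q assume q: "q < length ?y"
    have qq: "11*q+10 < length (Wm ?y)" using q by simp
    have pos: "d+1+(11*q+10) = 11*(r+q)+10" using r by simp
    have "Wm ?z!(11*(r+q)+10) = Wm ?y!(11*q+10)" using mid[OF qq] unfolding pos .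
    moreover have "Wm ?z!(11*(r+q)+10) = ?z!(r+q)" using nth_Wm_u[of "r+q" ?z] lz q by simp
    moreover have "Wm ?y!(11*q+10) = ?y!q" using nth_Wm_u[OF q] .
    ultimately show "?z!(r-1+1+q) = ?y!q" using r1 by simp
  qed
  hence "r - 1 = 5 * length ?y + 4" by (rule Suc.IH)
  thus ?case using dr eqs by simp
qed

definition w0 :: "nat list \<Rightarrow> nat list" where "w0 x = x@[0]@x@[1]@x@[1]@x@[0]@x@[2]@x@[2]"

lemma Om_w0: "Om x = w0 x @ (x@[0]@x@[1]@x@[1]@x@[0]@x)" by (simp add: Om_def w0_def)

lemma pal_Om: "is_pal x \<Longrightarrow> is_pal (Om x)" by (simp add: is_pal_def Om_def)

lemma closure_T: "pal_closure (w0 (T i)) = Om (T i)"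
proof (rule closure_eq)
  let ?x = "T i"
  let ?L = "length ?x"
  show "is_pal (Om ?x)" using pal_Om pal_T by blast
  show "prefix (w0 ?x) (Om ?x)" by (simp add: Om_w0)
  show "length (Om ?x) \<le> 2 * length (w0 ?x)" by (simp add: Om_def w0_def)
  fix P' assume P': "is_pal P'" "prefix (w0 ?x) P'"
  show "length (Om ?x) \<le> length P'"
  proof (rule ccontr)
    assume "\<not> ?thesis"
    hence lt: "length P' < 11*?L + 10" by (simp add: Om_def)
    have lw: "length (w0 ?x) = 6*?L+6" by (simp add: w0_def)
    have ge: "6*?L + 6 \<le> length P'" using prefix_length_le[OF P'(2)] lw by simp
    define d where "d = length P' - (6*?L+6)"
    have dle: "d \<le> 5*?L+3" using lt ge by (simp add: d_def)
    have pw: "\<And>m. m < 6*?L+6 \<Longrightarrow> P'!m = w0 ?x ! m" using prefix_nth[OF P'(2)] lw by simp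
    have po: "\<And>m. m < 6*?L+6 \<Longrightarrow> Om ?x ! m = w0 ?x ! m" using lw by (simp add: Om_w0 nth_append)
    have refl: "\<And>m. d \<le> m \<Longrightarrow> m < 6*?L+6 \<Longrightarrow> w0 ?x ! m = w0 ?x ! (6*?L+5 - (m - d))"
    proof -
      fix m assume m: "d \<le> m" "m < 6*?L+6"
      have "w0 ?x ! m = P'!m" using pw m by simp
      also have "\<dots> = P'!(length P' - Suc m)" using m ge by (intro pal_nth[OF P'(1)]) simp
      also have "length P' - Suc m = 6*?L+5 - (m - d)" using m ge by (simp add: d_def)
      also have "P'!(6*?L+5 - (m - d)) = w0 ?x ! (6*?L+5 - (m - d))" using pw by simp
      finally show "w0 ?x ! m = w0 ?x ! (6*?L+5 - (m - d))" .
    qed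
    define A where "A = ?x@[0]@?x@[1]@?x@[1]@?x@[0]@?x"
    have lA: "length A = 5*?L+4" by (simp add: A_def)
    have wA: "w0 ?x = A @ [2] @ ?x @ [2]" by (simp add: A_def w0_def)
    have v1: "w0 ?x ! (5*?L+4) = 2"
    proof -
      have e: "5*?L+4 = length A + 0" using lA by simp
      have "w0 ?x ! (length A + 0) = 2" unfolding wA nth_append_length_plus by simp
      thus ?thesis unfolding e .
    qed
    have v2: "w0 ?x ! (6*?L+5) = 2"
    proof -
      have e: "6*?L+5 = length A + Suc ?L" using lA by simp
      have "w0 ?x ! (length A + Suc ?L) = 2" unfolding wA nth_append_length_plus by simp
      thus ?thesis unfolding e .
    qed
    have v3: "\<And>q. q < ?L \<Longrightarrow> w0 ?x ! (5*?L+5+q) = ?x!q"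
    proof -
      fix q assume q: "q < ?L"
      have e: "5*?L+5+q = length A + Suc q" using lA by simp
      have "w0 ?x ! (length A + Suc q) = ?x!q" unfolding wA nth_append_length_plus using q
        by (simp add: nth_append)
      thus "w0 ?x ! (5*?L+5+q) = ?x!q" unfolding e .
    qed
    have "occ ?x (Om ?x) d"
      unfolding occ_def
    proof (intro conjI allI impI)
      show "d + ?L + 1 < length (Om ?x)" using dle by (simp add: Om_def)
      have "Om ?x ! d = w0 ?x ! d" by (rule po) (use dle in simp)
      also have "\<dots> = w0 ?x ! (6*?L+5 - (d - d))" by (rule refl) (use dle in simp_all)
      also have "\<dots> = 2" using v2 by simp
      finally show "Om ?x ! d = 2" .
      have "Om ?x ! (d + ?L + 1) = w0 ?x ! (d + ?L + 1)" by (rule po) (use dle in simp)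
      also have "\<dots> = w0 ?x ! (6*?L+5 - ((d + ?L + 1) - d))" by (rule refl) (use dle in simp_all)
      also have "6*?L+5 - ((d + ?L + 1) - d) = 5*?L+4" by simp
      finally show "Om ?x ! (d + ?L + 1) = 2" using v1 by simp
      fix q assume q: "q < ?L"
      have "Om ?x ! (d+1+q) = w0 ?x ! (d+1+q)" by (rule po) (use dle q in simp)
      also have "\<dots> = w0 ?x ! (6*?L+5 - ((d+1+q) - d))" by (rule refl) (use dle q in simp_all)
      also have "6*?L+5 - ((d+1+q) - d) = 5*?L+5+(?L - Suc q)" using q by simp
      also have "w0 ?x ! (5*?L+5+(?L - Suc q)) = ?x!(?L - Suc q)" by (rule v3) (use q in simp)
      also have "\<dots> = ?x!q" by (rule pal_nth[OF pal_T q, symmetric])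
      finally show "Om ?x ! (d+1+q) = ?x!q" .
    qed
    hence "d = 5*?L+4" by (rule occ_unique)
    thus False using dle by simp
  qed
qed

lemma v_T: "v i = T i"
proof (induction i)
  case 0 thus ?case by simp
next
  case (Suc i)
  have "v (Suc i) = pal_closure (w0 (v i))" by (simp add: w0_def)
  also have "\<dots> = Om (T i)" using Suc closure_T by simp
  finally show ?case using Om_T by simp
qed


lemma sublist_nthE:
  assumes "sublist E X"
  obtains p where "p + length E \<le> length X" "\<And>i. i < length E \<Longrightarrow> X!(p+i) = E!i"
proof -
  obtain ps ss where X: "X = ps @ E @ ss" using assms unfolding sublist_def by blast
  show ?thesis
    by (rule that[of "length ps"]) (auto simp: X nth_append)
qed

lemma sublist_of_nth:
  assumes "r + length Q \<le> length xs" "\<And>t. t < length Q \<Longrightarrow> xs!(r+t) = Q!t"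
  shows "sublist Q xs"
proof -
  have "Q = take (length Q) (drop r xs)"
    by (rule nth_equalityI) (use assms in auto)
  hence "xs = take r xs @ Q @ drop (length Q) (drop r xs)" by (metis append_take_drop_id)
  thus ?thesis unfolding sublist_def by blast
qed

lemma sublist_single: "c \<in> set xs \<Longrightarrow> sublist [c] xs"
  by (metis in_set_conv_decomp sublist_appendI append_Cons append_Nil)

lemma take65: "5 \<le> length u \<Longrightarrow> take 65 (Wm u) = Wm (take 5 u)"
proof (rule nth_equalityI)
  assume L: "5 \<le> length u"
  show "length (take 65 (Wm u)) = length (Wm (take 5 u))" using L by (simp add: min_def)
  fix n assume n: "n < length (take 65 (Wm u))"
  hence n65: "n < 65" by simp
  have a: "n < 11 * length u + 10" using n65 L by simp
  have b: "n < 11 * length (take 5 u) + 10" using n65 L by (simp add: min_def)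
  have c: "n mod 11 = 10 \<Longrightarrow> n div 11 < 5" using n65 by presburger
  show "take 65 (Wm u) ! n = Wm (take 5 u) ! n"
    using nth_Wm[OF a] nth_Wm[OF b] n65 c by auto
qed

lemma mod11: "(r::nat) < 11 \<Longrightarrow> (11*q + r) mod 11 = r \<and> (11*q + r) div 11 = q"
  by simp

lemma le11: "11*(X::nat) \<le> 11*a + 10 \<Longrightarrow> X \<le> a" by linarith

lemma window:
  assumes kL: "k \<le> length u" and mk: "m \<le> k" and m1: "1 \<le> m" and j: "j \<le> 10"
    and pal: "\<And>t. t < m \<Longrightarrow> u!(k-m+t) = u!(k-1-t)"
    and xy: "x + y = 11*(2*k-m) + 9"
    and x1: "11*(k-m)+10 \<le> x + j" and x2: "x + 1 \<le> 11*k + j"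
    and y1: "11*(k-m)+10 \<le> y + j" and y2: "y + 1 \<le> 11*k + j"
  shows "Wm u!x = Wm u!y"
proof -
  have xl: "x < 11*length u + 10" using x2 kL j by linarith
  have yl: "y < 11*length u + 10" using y2 kL j by linarith
  define c where "c = 2*k - m"
  have xyc: "x + y = 11*c + 9" using xy by (simp add: c_def)
  define a where "a = x div 11"
  define b where "b = x mod 11"
  have xab: "x = 11*a + b" and b11: "b < 11" by (simp_all add: a_def b_def)
  show ?thesis
  proof (cases "b = 10")
    case True
    have ac: "a + 1 \<le> c" using xyc xab True by linarith
    have yv: "y = 11*(c - a - 1) + 10" using xyc xab True ac by linarith
    have a1: "k - m \<le> a"
    proof -
      have "11*(k-m) \<le> 11*a + 10" using x1 j xab True by linarith
      thus ?thesis by (rule le11)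
    qed
    have a2: "a \<le> k - 1"
    proof -
      have "11*a + 11 \<le> 11*k + 10" using x2 j xab True by linarith
      thus ?thesis by linarith
    qed
    define t where "t = a - (k - m)"
    have tm: "t < m" using a1 a2 mk m1 by (simp add: t_def)
    have xt: "a = k - m + t" using a1 by (simp add: t_def)
    have yt: "c - a - 1 = k - 1 - t" using xt mk m1 tm by (simp add: c_def)
    have "Wm u!x = u!a" using nth_Wm[OF xl] True xab by simp
    also have "\<dots> = u!(k-1-t)" using xt pal[OF tm] by simp
    also have "\<dots> = Wm u!y" using nth_Wm[OF yl] yv yt by simp
    finally show ?thesis .
  next
    case False
    hence b10: "b < 10" using b11 by simp
    have ac: "a \<le> c"
    proof -
      have "11*a \<le> 11*c + 9" using xyc xab by linarith
      thus ?thesis by linarith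
    qed
    have yv: "y = 11*(c - a) + (9 - b)" using xyc xab b10 ac by linarith
    have ym: "y mod 11 = 9 - b" using yv mod11[of "9-b" "c-a"] by simp
    have n10: "9 - b \<noteq> 10" by simp
    have "Wm u!x = sw!b" using nth_Wm[OF xl] False xab b10 by simp
    also have "\<dots> = sw!(9 - b)" using sw_nth_pal[OF b10] by simp
    also have "\<dots> = Wm u!y" using nth_Wm[OF yl] ym n10 by simp
    finally show ?thesis .
  qed
qed

lemma main_W:
  assumes R: "rich u" and P5: "take 5 u = [0,1,1,0,2]" and S: "set u \<subseteq> {0,1,2}"
  shows "rich (Wm u)"
proof -
  let ?W = "Wm u"
  let ?L = "length u"
  have "length (take 5 u) = 5" using P5 by simp
  hence L5: "5 \<le> ?L" by simp
  have "\<forall>N \<le> length ?W. rich (take N ?W)"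
  proof (intro allI impI)
    fix N assume "N \<le> length ?W" thus "rich (take N ?W)"
    proof (induction N)
      case 0 show ?case by (simp add: rich_Nil)
    next
      case (Suc N)
      have NW: "N < 11*?L+10" using Suc.prems by simp
      have IH: "rich (take N ?W)" using Suc by simp
      have Zeq: "take (Suc N) ?W = take N ?W @ [?W!N]" using NW by (simp add: take_Suc_conv_app_nth)
      show ?case
      proof (cases "Suc N \<le> 65")
        case True
        have "take (Suc N) ?W = take (Suc N) (take 65 ?W)" using True by (simp add: min_def)
        also have "\<dots> = take (Suc N) (Wm [0,1,1,0,2])" using take65[OF L5] P5 by simp
        finally show ?thesis using rich_prefix[OF base_rich] by (simp add: take_is_prefix)
      next
        case False
        define k where "k = Suc N div 11"
        define j where "j = Suc N mod 11"
        have Nkj: "Suc N = 11*k + j" by (simp add: k_def j_def)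
        have j10: "j \<le> 10" by (simp add: j_def)
        have k6: "6 \<le> k" using False by (simp add: k_def)
        have kL: "k \<le> ?L" using NW by (simp add: k_def)
        have rk: "rich (take k u)" using rich_prefix[OF R] by (simp add: take_is_prefix)
        have tk: "take k u = take (k-1) u @ [u!(k-1)]"
          using k6 kL take_Suc_conv_app_nth[of "k-1" u] by simp
        obtain Q where Q: "suffix Q (take k u)" "is_pal Q" "\<not> sublist Q (take (k-1) u)"
          using rich_new_pal[of "take (k-1) u" "u!(k-1)"] rk tk by auto
        define m where "m = length Q"
        have mk: "m \<le> k" using suffix_length_le[OF Q(1)] kL by (simp add: m_def)
        obtain A where A: "take k u = A @ Q" using Q(1) unfolding suffix_def by blast
        have "length (take k u) = k" using kL by simp
        hence "length A + m = k" using A by (simp add: m_def)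
        hence lA: "length A = k - m" by simp
        have Qnth: "\<And>t. t < m \<Longrightarrow> Q!t = u!(k-m+t)"
        proof -
          fix t assume t: "t < m"
          have "take k u ! (length A + t) = Q!t" unfolding A by (simp add: nth_append)
          moreover have "take k u ! (length A + t) = u!(k-m+t)" using lA t mk by simp
          ultimately show "Q!t = u!(k-m+t)" by simp
        qed
        have m0: "m \<noteq> 0" using Q(3) by (auto simp: m_def)
        have m2: "2 \<le> m"
        proof (rule ccontr)
          assume "\<not> 2 \<le> m"
          hence m1: "m = 1" using m0 by simp
          then obtain c where c: "Q = [c]" unfolding m_def by (metis length_0_conv length_Suc_conv One_nat_def)
          have "c = Q!0" using c by simp
          also have "\<dots> = u!(k-m+0)" using m1 by (intro Qnth) simp
          finally have "c = u!(k-1)" using m1 by simp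
          hence Qe: "Q = [u!(k-1)]" using c by simp
          have kk: "k - 1 < length u" using k6 kL by simp
          have "u!(k-1) \<in> set u" using nth_mem[OF kk] .
          hence c3: "u!(k-1) \<in> {0,1,2}" using S by blast
          have s5: "set (take 5 u) = {0,1,2}" using P5 by (simp add: insert_commute)
          have "set (take 5 u) \<subseteq> set (take (k-1) u)" using k6 by (intro set_take_subset_set_take) simp
          hence "u!(k-1) \<in> set (take (k-1) u)" using c3 s5 by blast
          hence "sublist [u!(k-1)] (take (k-1) u)" by (rule sublist_single)
          thus False using Q(3) Qe by simp
        qed
        have Qpal: "\<And>t. t < m \<Longrightarrow> u!(k-m+t) = u!(k-1-t)"
        proof -
          fix t assume t: "t < m"
          have "u!(k-m+t) = Q!t" using Qnth[OF t] by simp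
          also have "\<dots> = Q!(m - Suc t)" using t unfolding m_def by (rule pal_nth[OF Q(2)])
          also have "\<dots> = u!(k-m+(m - Suc t))" using Qnth[of "m - Suc t"] t by simp
          also have "k-m+(m - Suc t) = k-1-t" using t mk by simp
          finally show "u!(k-m+t) = u!(k-1-t)" .
        qed
        define st where "st = 11*(k-m)+10-j"
        define E where "E = drop st (take (Suc N) ?W)"
        have lE: "length E = 11*m + 2*j - 10" using Nkj NW mk m2 j10
          by (simp add: E_def st_def)
        have Enth: "\<And>i. i < length E \<Longrightarrow> E!i = ?W!(st+i)"
          using NW by (simp add: E_def)
        have sufE: "suffix E (take N ?W @ [?W!N])" unfolding E_def Zeq[symmetric] by (rule suffix_drop)
        have palE: "is_pal E"
          unfolding is_pal_def
        proof (rule nth_equalityI)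
          show "length (rev E) = length E" by simp
          fix i assume i: "i < length (rev E)"
          hence i': "i < length E" by simp
          have "rev E ! i = E!(length E - Suc i)" using i' by (simp add: rev_nth)
          also have "\<dots> = ?W!(st + (length E - Suc i))" using Enth i' by simp
          also have "\<dots> = ?W!(st+i)"
          proof (rule window[OF kL mk _ j10 Qpal])
            show "1 \<le> m" using m2 by simp
            show "st + (length E - Suc i) + (st + i) = 11 * (2 * k - m) + 9"
              using lE i' Nkj mk m2 j10 by (simp add: st_def)
            show "11*(k-m)+10 \<le> st + (length E - Suc i) + j" using lE i' mk m2 j10 by (simp add: st_def)
            show "st + (length E - Suc i) + 1 \<le> 11*k + j" using lE i' mk m2 j10 by (simp add: st_def)
            show "11*(k-m)+10 \<le> st + i + j" using mk j10 by (simp add: st_def)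
            show "st + i + 1 \<le> 11*k + j" using lE i' mk m2 j10 by (simp add: st_def)
          qed
          also have "\<dots> = E!i" using Enth i' by simp
          finally show "rev E ! i = E!i" .
        qed
        have nsub: "\<not> sublist E (take N ?W)"
        proof
          assume "sublist E (take N ?W)"
          then obtain p where p1: "p + length E \<le> length (take N ?W)"
            and p2: "\<And>i. i < length E \<Longrightarrow> take N ?W ! (p+i) = E!i" by (rule sublist_nthE) blast
          have pN: "p + length E \<le> N" using p1 NW by simp
          have pW: "\<And>i. i < length E \<Longrightarrow> ?W!(p+i) = ?W!(st+i)"
            using p2 Enth pN by simp
          have sblk: "\<forall>q<10. ?W!(p+j+1+q) = sw!q"
          proof (intro allI impI)
            fix q :: nat assume q: "q < 10"
            have iq: "j+1+q < length E" using lE m2 q by simp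
            have "?W!(p+(j+1+q)) = ?W!(st+(j+1+q))" using pW[OF iq] .
            also have "st+(j+1+q) = 11*(k-m+1)+q" using mk m2 j10 by (simp add: st_def)
            also have "?W!(11*(k-m+1)+q) = sw!q" using nth_Wm_s[of q "k-m+1" u] q mk m2 kL by simp
            finally show "?W!(p+j+1+q) = sw!q" by (simp add: add.assoc)
          qed
          have "(p+j+1) mod 11 = 0"
            by (rule sync[OF sblk]) (use pN lE m2 NW in simp)
          then obtain r where r: "p+j+1 = 11*r" by (metis mod_eq_0_iff_dvd dvd_def)
          have r1: "1 \<le> r" using r by (cases r) auto
          have rb: "r + m \<le> k" using pN lE r Nkj m2 by simp
          have "sublist Q (take (k-1) u)"
          proof (rule sublist_of_nth[of "r-1"])
            show "r - 1 + length Q \<le> length (take (k-1) u)" using rb r1 kL by (simp add: m_def[symmetric])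
            fix t assume t: "t < length Q"
            hence tm: "t < m" by (simp add: m_def)
            have it: "j + 11*t < length E" using lE tm j10 by simp
            have "?W!(p+(j+11*t)) = ?W!(st+(j+11*t))" using pW[OF it] .
            also have "st+(j+11*t) = 11*(k-m+t)+10" using mk j10 by (simp add: st_def)
            also have "?W!(11*(k-m+t)+10) = u!(k-m+t)" using nth_Wm_u[of "k-m+t" u] tm mk kL by simp
            finally have e1: "?W!(p+(j+11*t)) = u!(k-m+t)" .
            have "p+(j+11*t) = 11*(r-1+t)+10" using r r1 by simp
            hence "?W!(p+(j+11*t)) = u!(r-1+t)" using nth_Wm_u[of "r-1+t" u] rb tm kL r1 by simp
            hence "u!(r-1+t) = Q!t" using e1 Qnth[OF tm] by simp
            moreover have "take (k-1) u ! (r-1+t) = u!(r-1+t)" using rb tm r1 by simp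
            ultimately show "take (k-1) u ! (r-1+t) = Q!t" by simp
          qed
          thus False using Q(3) by simp
        qed
        show ?thesis using rich_snoc[OF IH sufE palE nsub] Zeq by simp
      qed
    qed
  qed
  thus ?thesis by (metis order_refl take_all)
qed

lemma take5_Wm: "take 5 (Wm y) = [0,1,1,0,2]"
proof (rule nth_equalityI)
  show "length (take 5 (Wm y)) = length [0,1,1,0,2::nat]" by simp
  fix n assume "n < length (take 5 (Wm y))"
  hence n: "n < 5" by simp
  have "Wm y ! (11*0+n) = sw!n" using nth_Wm_s[of n 0 y] n by simp
  hence "take 5 (Wm y) ! n = sw!n" using n by simp
  moreover have "n \<in> {0,1,2,3,4}" using n by auto
  ultimately show "take 5 (Wm y) ! n = [0,1,1,0,2::nat] ! n" by (auto simp: sw_def)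
qed

lemma rich_T: "rich (T i)"
proof (induction i)
  case 0 thus ?case by (simp add: rich_Nil)
next
  case (Suc i)
  show ?case
  proof (cases i)
    case 0
    have "prefix (Wm []) (Wm [0,1,1,0,2])" by (simp add: Wm_def)
    thus ?thesis using rich_prefix[OF base_rich] 0 by simp
  next
    case (Suc i')
    have "take 5 (T i) = [0,1,1,0,2]" using Suc take5_Wm by simp
    thus ?thesis using main_W[OF Suc.IH _ set_T] by simp
  qed
qed

theorem lemma5p7:
  shows "is_pal (v i) \<and> rich (v i)"
  using v_T pal_T rich_T by simp

end
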